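(* Let $(S,\mathcal{E})$ be a qualitative evidence frame and let $\mathfrak{F}$ be a set of evidence allocation functions on $(S,\mathcal{E})$. Define $d:2^{\mathcal{E}}\to\tau_{\mathcal{E}}$ by $d(\emptyset)=S$ and, for $\mathbf{E}\neq\emptyset$, $d(\mathbf{E})=\min(\mathrm{dense}(\mathbf{E}),\subseteq)$, the least (w.r.t. inclusion) element of $\tau_{\mathbf{E}}$ that is dense in $\bigcup\mathbf{E}$ w.r.t. $\tau_{\mathbf{E}}$ (such a least element exists). Then $\mathfrak{F}\cup\{d\}$ is a set of evidence allocation functions on $(S,\mathcal{E})$.
   Context: A qualitative evidence frame is a pair $(S,\mathcal{E})$ where $S$ is a finite nonempty set and $\mathcal{E}$ is a nonempty family of subsets of $S$ with $\emptyset\notin\mathcal{E}$ and $S\notin\mathcal{E}$. For any family $\mathbf{E}\subseteq 2^S$, $\tau_{\mathbf{E}}$ denotes the topology on $S$ generated by $\mathbf{E}$ (as a subbasis): it consists of $\emptyset$, $S$, all finite intersections of members of $\mathbf{E}$, and all arbitrary unions of such finite intersections. For $\mathbf{E}\subseteq\mathcal{E}$, an element $D\in\tau_{\mathbf{E}}$ is called dense in $\bigcup\mathbf{E}$ w.r.t. $\tau_{\mathbf{E}}$ if $D\cap T\neq\emptyset$ for every nonempty $T\in\tau_{\mathbf{E}}$; $\mathrm{dense}(\mathbf{E})$ is the set of such elements. A set of evidence allocation functions on $(S,\mathcal{E})$ is a set $\mathfrak{F}$ of functions $2^{\mathcal{E}}\to\tau_{\mathcal{E}}$ such that for all $f,g\in\mathfrak{F}$: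 (1) $f(\emptyset)=S$; (2) for every nonempty $\mathbf{E}\subseteq\mathcal{E}$, either $f(\mathbf{E})=\emptyset$, or $f(\mathbf{E})\in\tau_{\mathbf{E}}$ and $f(\mathbf{E})$ is dense in $\bigcup\mathbf{E}$ w.r.t. $\tau_{\mathbf{E}}$; (3) for every $\mathbf{E}\subseteq\mathcal{E}$, $f(\mathbf{E})\subseteq g(\mathbf{E})$ or $g(\mathbf{E})\subseteq f(\mathbf{E})$. *)

theory Defs
  imports Main
begin

definition qe_frame :: "'a set \<Rightarrow> 'a set set \<Rightarrow> bool" where
  "qe_frame S \<E> \<longleftrightarrow> finite S \<and> S \<noteq> {} \<and> \<E> \<noteq> {} \<and> \<E> \<subseteq> Pow S \<and> {} \<notin> \<E> \<and> S \<notin> \<E>"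

definition gen_top :: "'a set \<Rightarrow> 'a set set \<Rightarrow> 'a set set" where
  "gen_top S E = insert {} (insert S
     {\<Union>U | U. U \<subseteq> {\<Inter>F | F. finite F \<and> F \<noteq> {} \<and> F \<subseteq> E}})"

definition dense_set :: "'a set \<Rightarrow> 'a set set \<Rightarrow> 'a set set" where
  "dense_set S E = {D \<in> gen_top S E. \<forall>T\<in>gen_top S E. T \<noteq> {} \<longrightarrow> D \<inter> T \<noteq> {}}"

definition eaf_set :: "'a set \<Rightarrow> 'a set set \<Rightarrow> ('a set set \<Rightarrow> 'a set) set \<Rightarrow> bool" where
  "eaf_set S \<E> \<FF> \<longleftrightarrow>
     (\<forall>f\<in>\<FF>. (\<forall>E. E \<subseteq> \<E> \<longrightarrow> f E \<in> gen_top S \<E>)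
        \<and> f {} = S
        \<and> (\<forall>E. E \<subseteq> \<E> \<and> E \<noteq> {} \<longrightarrow> f E = {} \<or> (f E \<in> gen_top S E \<and> f E \<in> dense_set S E)))
   \<and> (\<forall>f\<in>\<FF>. \<forall>g\<in>\<FF>. \<forall>E. E \<subseteq> \<E> \<longrightarrow> f E \<subseteq> g E \<or> g E \<subseteq> f E)"

definition min_dense :: "'a set \<Rightarrow> 'a set set \<Rightarrow> 'a set" where
  "min_dense S E = (if E = {} then S
     else (THE D. D \<in> dense_set S E \<and> (\<forall>D'\<in>dense_set S E. D \<subseteq> D')))"

end

theory Submission
  imports Defs
begin

lemma gt_sub:
  assumes "E \<subseteq> Pow S" shows "gen_top S E \<subseteq> Pow S"
  using assms unfolding gen_top_def by blast

lemma gt_mono: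
  assumes "E \<subseteq> E'" shows "gen_top S E \<subseteq> gen_top S E'"
proof
  fix X assume "X \<in> gen_top S E"
  then show "X \<in> gen_top S E'"
  proof -
    have "{\<Inter>F | F. finite F \<and> F \<noteq> {} \<and> F \<subseteq> E} \<subseteq> {\<Inter>F | F. finite F \<and> F \<noteq> {} \<and> F \<subseteq> E'}"
      using assms by blast
    then show ?thesis using \<open>X \<in> gen_top S E\<close> unfolding gen_top_def
      by (smt (verit) dual_order.trans insert_iff mem_Collect_eq)
  qed
qed

lemma gt_int:
  assumes "E \<subseteq> Pow S" and A: "A \<in> gen_top S E" and B: "B \<in> gen_top S E"
  shows "A \<inter> B \<in> gen_top S E"
proof -
  have sub: "A \<subseteq> S" "B \<subseteq> S" using gt_sub[OF assms(1)] A B by auto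
  let ?I = "{\<Inter>F | F. finite F \<and> F \<noteq> {} \<and> F \<subseteq> E}"
  show ?thesis
  proof (cases "A = {} \<or> B = {} \<or> A = S \<or> B = S")
    case True
    moreover have "{} \<in> gen_top S E" unfolding gen_top_def by simp
    moreover have "S \<inter> B = B" "A \<inter> S = A" using sub by auto
    ultimately show ?thesis using A B by (elim disjE) simp_all
  next
    case False
    have "A \<in> {\<Union>U | U. U \<subseteq> ?I}" "B \<in> {\<Union>U | U. U \<subseteq> ?I}"
      using A B False unfolding gen_top_def by simp_all
    then obtain U V where U: "U \<subseteq> ?I" "A = \<Union>U" and V: "V \<subseteq> ?I" "B = \<Union>V"
      by blast
    let ?W = "{u \<inter> v | u v. u \<in> U \<and> v \<in> V}"
    have AB: "A \<inter> B = \<Union>?W" unfolding U(2) V(2) by blast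
    moreover have "?W \<subseteq> ?I"
    proof
      fix w assume "w \<in> ?W"
      then obtain u v where w: "w = u \<inter> v" "u \<in> U" "v \<in> V" by blast
      have "u \<in> ?I" by (rule subsetD[OF U(1) w(2)])
      moreover have "v \<in> ?I" by (rule subsetD[OF V(1) w(3)])
      ultimately obtain F1 F2 where "u = \<Inter>F1" "finite F1" "F1 \<noteq> {}" "F1 \<subseteq> E"
        "v = \<Inter>F2" "finite F2" "F2 \<noteq> {}" "F2 \<subseteq> E" by (elim CollectE exE conjE) blast
      then have "w = \<Inter>(F1 \<union> F2)" "finite (F1 \<union> F2)" "F1 \<union> F2 \<noteq> {}" "F1 \<union> F2 \<subseteq> E"
        using w by auto
      then show "w \<in> ?I" by blast
    qed
    then have "\<Union>?W \<in> {\<Union>U | U. U \<subseteq> ?I}" by (rule CollectI[where P="\<lambda>x. \<exists>U. x = \<Union>U \<and> U \<subseteq> ?I", OF exI, OF conjI[OF refl]])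
    then have "A \<inter> B \<in> {\<Union>U | U. U \<subseteq> ?I}" unfolding AB .
    then show ?thesis unfolding gen_top_def by simp
  qed
qed

lemma S_dense:
  assumes "E \<subseteq> Pow S" shows "S \<in> dense_set S E"
  using gt_sub[OF assms] unfolding dense_set_def gen_top_def by blast

lemma dense_int:
  assumes "E \<subseteq> Pow S" and A: "A \<in> dense_set S E" and B: "B \<in> dense_set S E"
  shows "A \<inter> B \<in> dense_set S E"
proof -
  have "A \<inter> B \<in> gen_top S E" using gt_int[OF assms(1)] A B unfolding dense_set_def by auto
  moreover have "\<forall>T\<in>gen_top S E. T \<noteq> {} \<longrightarrow> A \<inter> B \<inter> T \<noteq> {}"
  proof (intro ballI impI)
    fix T assume T: "T \<in> gen_top S E" "T \<noteq> {}"
    then have "A \<inter> T \<in> gen_top S E" "A \<inter> T \<noteq> {}"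
      using gt_int[OF assms(1)] A unfolding dense_set_def by auto
    then have "B \<inter> (A \<inter> T) \<noteq> {}" using B unfolding dense_set_def by auto
    then show "A \<inter> B \<inter> T \<noteq> {}" by blast
  qed
  ultimately show ?thesis unfolding dense_set_def by blast
qed

lemma inter_closed:
  assumes "finite A" "A \<noteq> {}" "A \<subseteq> D" "\<And>x y. x \<in> D \<Longrightarrow> y \<in> D \<Longrightarrow> x \<inter> y \<in> D"
  shows "\<Inter>A \<in> D"
  using assms(1,2,3)
proof (induction A rule: finite_ne_induct)
  case (singleton x) then show ?case by simp
next
  case (insert x F) then show ?case using assms(4) by simp
qed

lemma least_dense:
  assumes "finite S" "E \<subseteq> Pow S"
  shows "\<exists>!D. D \<in> dense_set S E \<and> (\<forall>D'\<in>dense_set S E. D \<subseteq> D')"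
proof -
  have "dense_set S E \<subseteq> gen_top S E" unfolding dense_set_def by auto
  also have "\<dots> \<subseteq> Pow S" by (rule gt_sub[OF assms(2)])
  finally have fin: "finite (dense_set S E)"
    using assms(1) finite_subset by (metis finite_Pow_iff)
  have ne: "dense_set S E \<noteq> {}" using S_dense[OF assms(2)] by auto
  have I: "\<Inter>(dense_set S E) \<in> dense_set S E"
    apply (rule inter_closed[OF fin ne subset_refl])
    apply (erule (1) dense_int[OF assms(2)])
    done
  show ?thesis
  proof (rule ex1I[of _ "\<Inter>(dense_set S E)"])
    show "\<Inter>(dense_set S E) \<in> dense_set S E \<and> (\<forall>D'\<in>dense_set S E. \<Inter>(dense_set S E) \<subseteq> D')"
      using I by (intro conjI ballI Inter_lower) assumption+
    fix D assume "D \<in> dense_set S E \<and> (\<forall>D'\<in>dense_set S E. D \<subseteq> D')"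
    then show "D = \<Inter>(dense_set S E)" using I
      by (intro subset_antisym Inter_greatest) (simp_all add: Inter_lower)
  qed
qed

theorem proposition3:
  fixes S :: "'a set" and \<E> :: "'a set set" and \<FF> :: "('a set set \<Rightarrow> 'a set) set"
  assumes "qe_frame S \<E>"
    and "eaf_set S \<E> \<FF>"
  shows "(\<forall>E. E \<subseteq> \<E> \<and> E \<noteq> {} \<longrightarrow>
            (\<exists>!D. D \<in> dense_set S E \<and> (\<forall>D'\<in>dense_set S E. D \<subseteq> D')))
         \<and> eaf_set S \<E> (insert (min_dense S) \<FF>)"
proof -
  have fS: "finite S" and EP: "\<E> \<subseteq> Pow S" using assms(1) unfolding qe_frame_def by auto
  have U: "\<exists>!D. D \<in> dense_set S E \<and> (\<forall>D'\<in>dense_set S E. D \<subseteq> D')" if "E \<subseteq> \<E>" for E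
  proof -
    have "E \<subseteq> Pow S" using that EP by (rule order_trans)
    then show ?thesis by (rule least_dense[OF fS])
  qed
  have L1: "min_dense S E \<in> dense_set S E" and L2: "\<And>D'. D' \<in> dense_set S E \<Longrightarrow> min_dense S E \<subseteq> D'"
    if E: "E \<subseteq> \<E>" "E \<noteq> {}" for E
  proof -
    have md: "min_dense S E = (THE D. D \<in> dense_set S E \<and> (\<forall>D'\<in>dense_set S E. D \<subseteq> D'))"
      unfolding min_dense_def using E(2) by simp
    have "min_dense S E \<in> dense_set S E \<and> (\<forall>D'\<in>dense_set S E. min_dense S E \<subseteq> D')"
      unfolding md by (rule theI'[OF U[OF E(1)]])
    then show "min_dense S E \<in> dense_set S E" "\<And>D'. D' \<in> dense_set S E \<Longrightarrow> min_dense S E \<subseteq> D'"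
      by auto
  qed
  have d0: "min_dense S {} = S" unfolding min_dense_def by simp
  have Sgt: "S \<in> gen_top S \<E>" unfolding gen_top_def by simp
  have dgt: "min_dense S E \<in> gen_top S \<E>" if E: "E \<subseteq> \<E>" for E
  proof (cases "E = {}")
    case True then show ?thesis using d0 Sgt by simp
  next
    case False
    have "min_dense S E \<in> gen_top S E" using L1[OF E False] unfolding dense_set_def by simp
    then show ?thesis using gt_mono[OF E] by (rule subsetD[rotated])
  qed
  have dd: "min_dense S E \<in> gen_top S E \<and> min_dense S E \<in> dense_set S E"
    if E: "E \<subseteq> \<E>" "E \<noteq> {}" for E
    using L1[OF E] unfolding dense_set_def by simp
  have A1: "\<forall>f\<in>\<FF>. (\<forall>E. E \<subseteq> \<E> \<longrightarrow> f E \<in> gen_top S \<E>)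
        \<and> f {} = S
        \<and> (\<forall>E. E \<subseteq> \<E> \<and> E \<noteq> {} \<longrightarrow> f E = {} \<or> (f E \<in> gen_top S E \<and> f E \<in> dense_set S E))"
    by (rule conjunct1[OF assms(2)[unfolded eaf_set_def]])
  have A2: "\<forall>f\<in>\<FF>. \<forall>g\<in>\<FF>. \<forall>E. E \<subseteq> \<E> \<longrightarrow> f E \<subseteq> g E \<or> g E \<subseteq> f E"
    by (rule conjunct2[OF assms(2)[unfolded eaf_set_def]])
  have cmp: "f E \<subseteq> min_dense S E \<or> min_dense S E \<subseteq> f E" if f: "f \<in> \<FF>" and E: "E \<subseteq> \<E>" for f E
  proof (cases "E = {}")
    case True
    have "f {} = S" using A1 f by simp
    then show ?thesis using True d0 by simp
  next
    case False
    have "f E = {} \<or> (f E \<in> gen_top S E \<and> f E \<in> dense_set S E)" using bspec[OF A1 f] E False by blast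
    then show ?thesis
    proof
      assume "f E = {}" then show ?thesis by simp
    next
      assume "f E \<in> gen_top S E \<and> f E \<in> dense_set S E"
      then have "min_dense S E \<subseteq> f E" using L2[OF E False] by simp
      then show ?thesis by simp
    qed
  qed
  have "eaf_set S \<E> (insert (min_dense S) \<FF>)"
    unfolding eaf_set_def
  proof (rule conjI; rule ballI)
    fix f assume "f \<in> insert (min_dense S) \<FF>"
    then show "(\<forall>E. E \<subseteq> \<E> \<longrightarrow> f E \<in> gen_top S \<E>)
        \<and> f {} = S
        \<and> (\<forall>E. E \<subseteq> \<E> \<and> E \<noteq> {} \<longrightarrow> f E = {} \<or> (f E \<in> gen_top S E \<and> f E \<in> dense_set S E))"
    proof (rule insertE)
      assume "f = min_dense S" then show ?thesis using dgt d0 dd by simp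
    next
      assume "f \<in> \<FF>" then show ?thesis by (rule bspec[OF A1])
    qed
  next
    fix f assume f: "f \<in> insert (min_dense S) \<FF>"
    show "\<forall>g\<in>insert (min_dense S) \<FF>. \<forall>E. E \<subseteq> \<E> \<longrightarrow> f E \<subseteq> g E \<or> g E \<subseteq> f E"
    proof (rule ballI)
    fix g assume g: "g \<in> insert (min_dense S) \<FF>"
    show "\<forall>E. E \<subseteq> \<E> \<longrightarrow> f E \<subseteq> g E \<or> g E \<subseteq> f E"
    proof (intro allI impI)
      fix E assume E: "E \<subseteq> \<E>"
      show "f E \<subseteq> g E \<or> g E \<subseteq> f E"
        using f g
      proof (elim insertE)
        assume "f = min_dense S" "g = min_dense S" then show ?thesis by simp
      next
        assume "f = min_dense S" "g \<in> \<FF>" then show ?thesis using cmp[OF _ E, of g] by auto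
      next
        assume "f \<in> \<FF>" "g = min_dense S" then show ?thesis using cmp[OF _ E, of f] by auto
      next
        assume "f \<in> \<FF>" "g \<in> \<FF>" then show ?thesis using A2 E by simp
      qed
    qed
    qed
  qed
  then show ?thesis using U by simp
qed

end
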